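(* Let $n\ge2$, $\lambda>0$, and $\rho=(\rho_1,\dots,\rho_n)^\top\in(0,1)^n$ with $\sum_{j=1}^n\rho_j=1$. Let $\mathbf{A}=\rho\otimes(1,\dots,1)-\mathbf{I}\in\mathbb{R}^{n\times n}$ and consider $\frac{\mathrm{d}}{\mathrm{d}t}f=2\lambda\mathbf{A}f$, $f(0)=f^I\in\mathbb{R}^n$, with steady state $f^\infty=\rho$. Let $\psi\in C^2(J)$ be a convex entropy generator such that, for some $\mu>0$ and all $u=(u_1,\dots,u_n)^\top\in[0,1]^n$ with $\sum_j u_j=1$, $$\sum_{j=1}^n\psi''\Big(\frac{u_j}{\rho_j}\Big)\frac{1}{\rho_j}(\rho_j-u_j)^2\ \ge\ \frac{\mu}{2\lambda}\sum_{j=1}^n\psi'\Big(\frac{u_j}{\rho_j}\Big)(u_j-\rho_j).$$ Then for all non-negative normalized initial data $f^I$ (i.e. $f^I_j\ge0$, $\sum_jf^I_j=1$) the solution satisfies $$I_\psi(f(t)|f^\infty)\le e^{-(2\lambda+\mu)t}I_\psi(f^I|f^\infty),\qquad e_\psi(f(t)|f^\infty)\le e^{-(2\lambda+\mu)t}e_\psi(f^I|f^\infty),\qquad t\ge0.$$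
   Context: $J$ is $\mathbb{R}^+$ or $\mathbb{R}$. An entropy generator is a function $\psi\in C(\bar J)\cap C^2(J)$ with $\psi(1)=0$, $\psi\ge0$, $\psi''\ge0$ on $J$. The relative entropy is $e_\psi(f|f^\infty)=\sum_{j=1}^n\psi(f_j/f^\infty_j)f^\infty_j$ and the Fisher information is $I_\psi(f|f^\infty)=\sum_{j=1}^n\psi'(f_j/f^\infty_j)\,2\lambda\,(f_j-f^\infty_j)$ (so that $\frac{\mathrm{d}}{\mathrm{d}t}e_\psi(f(t)|f^\infty)=-I_\psi(f(t)|f^\infty)$). *)

theory Defs
  imports "HOL-Analysis.Analysis"
begin

definition rel_entropy :: "(real \<Rightarrow> real) \<Rightarrow> real^'n \<Rightarrow> real^'n \<Rightarrow> real" where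
  "rel_entropy psi f finf = (\<Sum>j\<in>UNIV. psi (f$j / finf$j) * finf$j)"

definition fisher_info :: "(real \<Rightarrow> real) \<Rightarrow> real \<Rightarrow> real^'n \<Rightarrow> real^'n \<Rightarrow> real" where
  "fisher_info psi lam f finf = (\<Sum>j\<in>UNIV. deriv psi (f$j / finf$j) * (2 * lam) * (f$j - finf$j))"

definition matA :: "real^'n \<Rightarrow> real^'n^'n" where
  "matA rho = (\<chi> i j. rho$i - (if i = j then 1 else 0))"

end

theory Submission imports Defs begin

lemma matA_apply: "(matA rho *v v) $ i = rho$i * (\<Sum>j\<in>UNIV. v$j) - v$i"
proof -
  have "(matA rho *v v) $ i = (\<Sum>j\<in>UNIV. (rho$i - (if i = j then 1 else 0)) * v$j)"
    by (simp add: matA_def matrix_vector_mult_def)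
  also have "\<dots> = (\<Sum>j\<in>UNIV. rho$i * v$j) - (\<Sum>j\<in>UNIV. (if i = j then v$j else 0))"
    by (subst sum_subtractf[symmetric], rule sum.cong) (auto simp: left_diff_distrib)
  also have "\<dots> = rho$i * (\<Sum>j\<in>UNIV. v$j) - v$i"
    by (simp add: sum_distrib_left)
  finally show ?thesis .
qed

lemma ode_sol:
  fixes rho fI :: "real^'n" and f :: "real \<Rightarrow> real^'n"
  assumes rho_sum: "(\<Sum>j\<in>UNIV. rho$j) = 1"
    and fI_sum: "(\<Sum>j\<in>UNIV. fI$j) = 1"
    and f_init: "f 0 = fI"
    and f_ode: "\<forall>t\<ge>0. (f has_vector_derivative ((2 * lam) *\<^sub>R (matA rho *v f t))) (at t within {0..})"
  shows "\<forall>t\<ge>0. f t $ i = rho$i + exp(-(2*lam)*t) * (fI$i - rho$i)"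
proof -
  have comp: "((\<lambda>t. f t $ k) has_real_derivative (2*lam) * (rho$k * (\<Sum>j\<in>UNIV. f t$j) - f t$k)) (at t within {0..})"
    if "t \<ge> 0" for t k
  proof -
    have "((\<lambda>t. f t $ k) has_vector_derivative ((2 * lam) *\<^sub>R (matA rho *v f t)) $ k) (at t within {0..})"
      using bounded_linear.has_vector_derivative[OF bounded_linear_vec_nth f_ode[rule_format, OF that]] .
    then show ?thesis by (simp add: has_real_derivative_iff_has_vector_derivative matA_apply)
  qed
  have S: "((\<lambda>t. \<Sum>j\<in>UNIV. f t $ j) has_real_derivative 0) (at t within {0..})" if "t \<ge> 0" for t
  proof -
    have "((\<lambda>t. \<Sum>j\<in>UNIV. f t $ j) has_real_derivative (\<Sum>k\<in>UNIV. (2*lam) * (rho$k * (\<Sum>j\<in>UNIV. f t$j) - f t$k))) (at t within {0..})"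
      by (rule DERIV_sum) (use comp that in auto)
    moreover have "(\<Sum>k\<in>UNIV. (2*lam) * (rho$k * (\<Sum>j\<in>UNIV. f t$j) - f t$k)) = 0"
      by (simp add: sum_distrib_left[symmetric] sum_subtractf sum_distrib_right[symmetric] rho_sum)
    ultimately show ?thesis by simp
  qed
  obtain c where c: "\<forall>t\<in>{0..}. (\<Sum>j\<in>UNIV. f t $ j) = (c::real)"
    using has_field_derivative_zero_constant[of "{0::real..}" "\<lambda>t. \<Sum>j\<in>UNIV. f t $ j"] S by auto
  have S1: "(\<Sum>j\<in>UNIV. f t $ j) = 1" if "t \<ge> 0" for t
    using c that f_init fI_sum by (metis atLeast_iff order_refl)
  have G: "((\<lambda>t. exp (2*lam*t) * (f t $ i - rho$i)) has_real_derivative 0) (at t within {0..})" if "t \<ge> 0" for t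
  proof -
    have "((\<lambda>t. exp (2*lam*t) * (f t $ i - rho$i)) has_real_derivative
       (exp (2*lam*t) * (2*lam)) * (f t $ i - rho$i) + exp (2*lam*t) * ((2*lam) * (rho$i * (\<Sum>j\<in>UNIV. f t$j) - f t$i)))
       (at t within {0..})"
    proof -
      have e: "((\<lambda>t. exp (2*lam*t)) has_real_derivative exp (2*lam*t) * (2*lam)) (at t within {0..})"
        by (auto intro!: derivative_eq_intros)
      show ?thesis
        by (rule DERIV_mult[OF e DERIV_diff[OF comp[OF that] DERIV_const], THEN DERIV_cong]) simp
    qed
    then show ?thesis using S1[OF that] by (simp add: algebra_simps)
  qed
  obtain d where d: "\<forall>t\<in>{0..}. exp (2*lam*t) * (f t $ i - rho$i) = (d::real)"
    using has_field_derivative_zero_constant[of "{0::real..}" "\<lambda>t. exp (2*lam*t) * (f t $ i - rho$i)"] G by auto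
  show ?thesis
  proof (intro allI impI)
    fix t :: real assume t: "t \<ge> 0"
    have "exp (2*lam*t) * (f t $ i - rho$i) = fI$i - rho$i"
      using d t f_init by (metis atLeast_iff exp_zero mult_1 mult_zero_right order_refl)
    then have "f t $ i - rho$i = exp(-(2*lam)*t) * (fI$i - rho$i)"
      by (simp add: exp_minus field_simps)
    then show "f t $ i = rho$i + exp(-(2*lam)*t) * (fI$i - rho$i)" by simp
  qed
qed

theorem theorem4:
  fixes rho :: "real^'n" and lam mu :: real and J :: "real set"
    and psi :: "real \<Rightarrow> real" and fI :: "real^'n" and f :: "real \<Rightarrow> real^'n"
  assumes n2: "CARD('n) \<ge> 2"
    and lam: "lam > 0"
    and rho_range: "\<forall>j. 0 < rho$j \<and> rho$j < 1"
    and rho_sum: "(\<Sum>j\<in>UNIV. rho$j) = 1"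
    and J: "J = {0<..} \<or> J = UNIV"
    and psi_cont: "continuous_on (closure J) psi"
    and psi_d1: "\<forall>x\<in>J. (psi has_real_derivative deriv psi x) (at x)"
    and psi_d2: "\<forall>x\<in>J. (deriv psi has_real_derivative deriv (deriv psi) x) (at x)"
    and psi_C2: "continuous_on J (deriv (deriv psi))"
    and psi_one: "psi 1 = 0"
    and psi_nonneg: "\<forall>x\<in>J. psi x \<ge> 0"
    and psi_convex: "\<forall>x\<in>J. deriv (deriv psi) x \<ge> 0"
    and mu: "mu > 0"
    and cond: "\<forall>u::real^'n. (\<forall>j. 0 \<le> u$j \<and> u$j \<le> 1 \<and> u$j / rho$j \<in> J) \<and> (\<Sum>j\<in>UNIV. u$j) = 1 \<longrightarrow>
        (\<Sum>j\<in>UNIV. deriv (deriv psi) (u$j / rho$j) * (1 / rho$j) * (rho$j - u$j)^2)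
          \<ge> mu / (2 * lam) * (\<Sum>j\<in>UNIV. deriv psi (u$j / rho$j) * (u$j - rho$j))"
    and fI_nonneg: "\<forall>j. fI$j \<ge> 0"
    and fI_sum: "(\<Sum>j\<in>UNIV. fI$j) = 1"
    and f_init: "f 0 = fI"
    and f_ode: "\<forall>t\<ge>0. (f has_vector_derivative ((2 * lam) *\<^sub>R (matA rho *v f t))) (at t within {0..})"
  shows "(\<forall>t\<ge>0. rel_entropy psi (f t) rho \<le> exp (-(2 * lam + mu) * t) * rel_entropy psi fI rho)
       \<and> ((\<forall>j. fI$j / rho$j \<in> J) \<longrightarrow>
          (\<forall>t\<ge>0. fisher_info psi lam (f t) rho \<le> exp (-(2 * lam + mu) * t) * fisher_info psi lam fI rho))"
proof -
  have rpos: "\<And>j. rho$j > 0" using rho_range by auto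
  have rne: "\<And>j. rho$j \<noteq> 0" using rpos by (metis less_irrefl)
  define d where "d j = fI$j / rho$j - 1" for j
  define Y where "Y j r = 1 + r * d j" for j r
  define E where "E r = (\<Sum>j\<in>UNIV. psi (Y j r) * rho$j)" for r
  define F where "F r = (\<Sum>j\<in>UNIV. deriv psi (Y j r) * d j * rho$j)" for r
  define F2 where "F2 r = (\<Sum>j\<in>UNIV. deriv (deriv psi) (Y j r) * d j * d j * rho$j)" for r
  define a where "a = mu / (2 * lam)"
  have a0: "a > 0" using mu lam by (simp add: a_def)
  have xnn: "fI$j / rho$j \<ge> 0" for j using fI_nonneg rpos by (simp add: less_imp_le)
  have Yalt: "Y j r = (1 - r) + r * (fI$j / rho$j)" for j r by (simp add: Y_def d_def algebra_simps)
  have inJ: "Y j r \<in> J" if "0 \<le> r" "r < 1" for j r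
  proof -
    have "Y j r > 0" unfolding Yalt using that xnn[of j]
      by (smt (verit) mult_nonneg_nonneg)
    then show ?thesis using J by auto
  qed
  have inCl: "Y j r \<in> closure J" if "0 \<le> r" "r \<le> 1" for j r
  proof -
    have "Y j r \<ge> 0" unfolding Yalt using that xnn[of j]
      by (smt (verit) mult_nonneg_nonneg)
    then show ?thesis using J by auto
  qed
  have dY: "((\<lambda>r. Y j r) has_real_derivative d j) (at r)" for j r
    unfolding Y_def by (auto intro!: derivative_eq_intros)
  have dE: "(E has_real_derivative F r) (at r)" if "\<forall>j. Y j r \<in> J" for r
    unfolding E_def F_def
    by (rule DERIV_sum, rule DERIV_cmult_right, rule DERIV_chain2[OF _ dY]) (use psi_d1 that in auto)
  have dF: "(F has_real_derivative F2 r) (at r)" if "\<forall>j. Y j r \<in> J" for r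
  proof -
    have "(F has_real_derivative (\<Sum>j\<in>UNIV. deriv (deriv psi) (Y j r) * d j * d j * rho$j)) (at r)"
      unfolding F_def
      by (rule DERIV_sum, rule DERIV_cmult_right, rule DERIV_cmult_right, rule DERIV_chain2[OF _ dY]) (use psi_d2 that in auto)
    then show ?thesis by (simp add: F2_def)
  qed
  have key: "r * F2 r \<ge> a * F r" if r: "0 < r" "r \<le> 1" "\<forall>j. Y j r \<in> J" for r
  proof -
    define u where "u = (\<chi> j. rho$j * Y j r)"
    have uj: "u$j = (1 - r) * rho$j + r * fI$j" for j
      by (simp add: u_def Y_def d_def field_simps rne)
    have unn: "u$j \<ge> 0" for j unfolding uj using r rpos[of j] fI_nonneg
      by (simp add: less_imp_le)
    have usum: "(\<Sum>j\<in>UNIV. u$j) = 1"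
      unfolding uj by (simp add: sum.distrib sum_distrib_left[symmetric] rho_sum fI_sum)
    have ule: "u$j \<le> 1" for j
      using member_le_sum[of j UNIV "\<lambda>j. u$j"] unn usum by auto
    have uY: "u$j / rho$j = Y j r" for j by (simp add: u_def rne)
    have C: "(\<Sum>j\<in>UNIV. deriv (deriv psi) (u$j / rho$j) * (1 / rho$j) * (rho$j - u$j)^2)
          \<ge> mu / (2 * lam) * (\<Sum>j\<in>UNIV. deriv psi (u$j / rho$j) * (u$j - rho$j))"
    proof (rule cond[rule_format])
      show "(\<forall>j. 0 \<le> u$j \<and> u$j \<le> 1 \<and> u$j / rho$j \<in> J) \<and> (\<Sum>j\<in>UNIV. u$j) = 1"
        using unn ule usum uY r(3) by auto
    qed
    have L: "(\<Sum>j\<in>UNIV. deriv (deriv psi) (u$j / rho$j) * (1 / rho$j) * (rho$j - u$j)^2) = r * (r * F2 r)"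
      unfolding F2_def sum_distrib_left
    proof (rule sum.cong)
      fix j
      have e: "rho$j - u$j = -(r * d j * rho$j)" by (simp add: u_def Y_def algebra_simps)
      show "deriv (deriv psi) (u$j / rho$j) * (1 / rho$j) * (rho$j - u$j)^2 = r * (r * (deriv (deriv psi) (Y j r) * d j * d j * rho$j))"
        unfolding uY e using rne[of j] by (simp add: power2_eq_square field_simps)
    qed simp
    have R: "(\<Sum>j\<in>UNIV. deriv psi (u$j / rho$j) * (u$j - rho$j)) = r * F r"
      unfolding F_def sum_distrib_left
    proof (rule sum.cong)
      fix j
      have e: "u$j - rho$j = r * d j * rho$j" by (simp add: u_def Y_def algebra_simps)
      show "deriv psi (u$j / rho$j) * (u$j - rho$j) = r * (deriv psi (Y j r) * d j * rho$j)"
        unfolding uY e by (simp add: field_simps)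
    qed simp
    have "r * (r * F2 r) \<ge> r * (a * F r)" using C L R by (simp add: a_def mult.left_commute)
    then show ?thesis using r by simp
  qed
  define p where "p = -(1 + a)"
  have powr_p: "r powr p * r powr (1 + a) = 1" if "r > 0" for r :: real
    using that by (simp add: powr_add[symmetric] p_def)
  have dpow: "((\<lambda>r. r powr p) has_real_derivative p * (r powr p / r)) (at r)" if "r > 0" for r :: real
    using has_real_derivative_powr[OF that, of p] that by (simp add: powr_diff)
  have dH: "((\<lambda>r. r * F r - (1 + a) * E r) has_real_derivative (1 * F r + F2 r * r) - (1 + a) * F r) (at r)"
    if "\<forall>j. Y j r \<in> J" for r
    by (rule DERIV_diff[OF DERIV_mult[OF DERIV_ident dF[OF that]] DERIV_cmult[OF dE[OF that]]])
  have E0: "E 0 = 0" by (simp add: E_def Y_def psi_one)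
  have Hpos: "s * F s - (1 + a) * E s \<ge> 0" if s: "0 < s" "s < 1" for s
  proof -
    have "(\<lambda>r. r * F r - (1 + a) * E r) 0 \<le> (\<lambda>r. r * F r - (1 + a) * E r) s"
    proof (rule DERIV_nonneg_imp_increasing_open[where a=0 and b=s and f="\<lambda>r. r * F r - (1 + a) * E r"])
      show "0 \<le> s" using s by simp
    next
      fix r assume r: "0 < r" "r < s"
      then have YJ: "\<forall>j. Y j r \<in> J" using inJ s by auto
      have "((\<lambda>r. r * F r - (1 + a) * E r) has_real_derivative (1 * F r + F2 r * r) - (1 + a) * F r) (at r)"
        by (rule dH[OF YJ])
      moreover have "(1 * F r + F2 r * r) - (1 + a) * F r \<ge> 0"
        using key[of r] r s YJ by (simp add: algebra_simps)
      ultimately show "\<exists>y. ((\<lambda>r. r * F r - (1 + a) * E r) has_real_derivative y) (at r) \<and> y \<ge> 0" by blast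
    next
      show "continuous_on {0..s} (\<lambda>r. r * F r - (1 + a) * E r)"
      proof (rule continuous_at_imp_continuous_on, intro ballI)
        fix r assume r: "r \<in> {0..s}"
        then have YJ: "\<forall>j. Y j r \<in> J" using inJ s by auto
        have "((\<lambda>r. r * F r - (1 + a) * E r) has_real_derivative (1 * F r + F2 r * r) - (1 + a) * F r) (at r)"
          by (rule dH[OF YJ])
        then show "isCont (\<lambda>r. r * F r - (1 + a) * E r) r" by (rule DERIV_isCont)
      qed
    qed
    then show ?thesis using E0 by simp
  qed
  have Econt: "continuous_on {0..1} E"
    unfolding E_def
  proof (intro continuous_on_sum continuous_on_mult_right ballI)
    fix j :: 'n
    show "continuous_on {0..1} (\<lambda>r. psi (Y j r))"
    proof (rule continuous_on_compose2[OF psi_cont])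
      show "continuous_on {0..1} (Y j)" unfolding Y_def by (intro continuous_intros)
      show "Y j ` {0..1} \<subseteq> closure J" using inCl by auto
    qed
  qed
  have Ebound: "E s \<le> s powr (1 + a) * E 1" if s: "0 < s" "s \<le> 1" for s
  proof -
    have "(\<lambda>r. E r * r powr p) s \<le> (\<lambda>r. E r * r powr p) 1"
    proof (rule DERIV_nonneg_imp_increasing_open[where a=s and b=1 and f="\<lambda>r. E r * r powr p"])
      show "s \<le> 1" using s by simp
    next
      fix r assume r: "s < r" "r < 1"
      then have YJ: "\<forall>j. Y j r \<in> J" using inJ s by auto
      have rp: "r > 0" using r s by simp
      have "((\<lambda>r. E r * r powr p) has_real_derivative F r * r powr p + (p * (r powr p / r)) * E r) (at r)"
        by (rule DERIV_mult[OF dE[OF YJ] dpow[OF rp]])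
      moreover have "F r * r powr p + (p * (r powr p / r)) * E r = (r powr p / r) * (r * F r - (1 + a) * E r)"
        using rp by (simp add: p_def field_simps)
      moreover have "(r powr p / r) * (r * F r - (1 + a) * E r) \<ge> 0"
        using Hpos[of r] rp r by simp
      ultimately show "\<exists>y. ((\<lambda>r. E r * r powr p) has_real_derivative y) (at r) \<and> y \<ge> 0" by auto
    next
      show "continuous_on {s..1} (\<lambda>r. E r * r powr p)"
        using s by (intro continuous_intros continuous_on_subset[OF Econt]) auto
    qed
    then have "E s * s powr p \<le> E 1" by simp
    then have "E s * s powr p * s powr (1 + a) \<le> E 1 * s powr (1 + a)"
      by (rule mult_right_mono) simp
    moreover have "E s * s powr p * s powr (1 + a) = E s" using powr_p[OF s(1)] by (simp add: mult.assoc)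
    ultimately show ?thesis by (metis mult.commute)
  qed
  have Fbound: "s * F s \<le> s powr (1 + a) * F 1"
    if xJ: "\<forall>j. fI$j / rho$j \<in> J" and s: "0 < s" "s \<le> 1" for s
  proof -
    have YJ1: "\<forall>j. Y j r \<in> J" if "0 \<le> r" "r \<le> 1" for r
    proof (cases "r = 1")
      case True then show ?thesis using xJ by (simp add: Y_def d_def)
    next
      case False then show ?thesis using inJ that by auto
    qed
    have dK: "((\<lambda>r. r * F r * r powr p) has_real_derivative (1 * F r + F2 r * r) * r powr p + (p * (r powr p / r)) * (r * F r)) (at r)"
      if "0 < r" "r \<le> 1" for r
      by (rule DERIV_mult[OF DERIV_mult[OF DERIV_ident dF[OF YJ1]] dpow]) (use that in auto)
    have "(\<lambda>r. r * F r * r powr p) s \<le> (\<lambda>r. r * F r * r powr p) 1"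
    proof (rule DERIV_nonneg_imp_increasing_open[where a=s and b=1 and f="\<lambda>r. r * F r * r powr p"])
      show "s \<le> 1" using s by simp
    next
      fix r assume r: "s < r" "r < 1"
      have rp: "r > 0" using r s by simp
      have "(1 * F r + F2 r * r) * r powr p + (p * (r powr p / r)) * (r * F r) = r powr p * (r * F2 r - a * F r)"
        using rp by (simp add: p_def field_simps)
      moreover have "r powr p * (r * F2 r - a * F r) \<ge> 0"
        using key[of r] rp r YJ1[of r] by simp
      ultimately show "\<exists>y. ((\<lambda>r. r * F r * r powr p) has_real_derivative y) (at r) \<and> y \<ge> 0"
        using dK[of r] rp r by auto
    next
      show "continuous_on {s..1} (\<lambda>r. r * F r * r powr p)"
        by (rule continuous_at_imp_continuous_on, intro ballI, rule DERIV_isCont[OF dK]) (use s in auto)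
    qed
    then have "s * F s * s powr p \<le> F 1" by simp
    then have "s * F s * s powr p * s powr (1 + a) \<le> F 1 * s powr (1 + a)"
      by (rule mult_right_mono) simp
    moreover have "s * F s * s powr p * s powr (1 + a) = s * F s" using powr_p[OF s(1)] by (simp add: mult.assoc)
    ultimately show ?thesis by (metis mult.commute)
  qed
  have sol: "\<forall>t\<ge>0. f t $ j = rho$j + exp(-(2*lam)*t) * (fI$j - rho$j)" for j
    by (rule ode_sol[OF rho_sum fI_sum f_init f_ode])
  have fY: "f t $ j / rho$j = Y j (exp(-(2*lam)*t))" if "t \<ge> 0" for t j
    using sol[of j, rule_format, OF that] rne[of j] by (simp add: Y_def d_def field_simps)
  have fd: "f t $ j - rho$j = exp(-(2*lam)*t) * d j * rho$j" if "t \<ge> 0" for t j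
  proof -
    have "d j * rho$j = fI$j - rho$j" using rne[of j] by (simp add: d_def field_simps)
    then show ?thesis using sol[of j, rule_format, OF that] by (simp add: mult.assoc)
  qed
  have Y1: "Y j 1 = fI$j / rho$j" for j by (simp add: Y_def d_def)
  have ex: "exp (-(2 * lam + mu) * t) = exp(-(2*lam)*t) powr (1 + a)" for t
  proof -
    have "(1 + a) * (-(2*lam)*t) = -(2 * lam + mu) * t" using lam by (simp add: a_def field_simps)
    then show ?thesis by (simp add: powr_def)
  qed
  have s01: "0 < exp(-(2*lam)*t) \<and> exp(-(2*lam)*t) \<le> 1" if "t \<ge> 0" for t
    using that lam by (simp add: mult_nonneg_nonneg)
  have part1: "\<forall>t\<ge>0. rel_entropy psi (f t) rho \<le> exp (-(2 * lam + mu) * t) * rel_entropy psi fI rho"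
  proof (intro allI impI)
    fix t :: real assume t: "t \<ge> 0"
    have "rel_entropy psi (f t) rho = E (exp(-(2*lam)*t))"
      unfolding rel_entropy_def E_def using fY[OF t] by simp
    moreover have "rel_entropy psi fI rho = E 1"
      unfolding rel_entropy_def E_def using Y1 by simp
    ultimately show "rel_entropy psi (f t) rho \<le> exp (-(2 * lam + mu) * t) * rel_entropy psi fI rho"
      using Ebound[of "exp(-(2*lam)*t)"] s01[OF t] ex[of t] by simp
  qed
  have part2: "\<forall>t\<ge>0. fisher_info psi lam (f t) rho \<le> exp (-(2 * lam + mu) * t) * fisher_info psi lam fI rho"
    if xJ: "\<forall>j. fI$j / rho$j \<in> J"
  proof (intro allI impI)
    fix t :: real assume t: "t \<ge> 0"
    define s where "s = exp(-(2*lam)*t)"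
    have "fisher_info psi lam (f t) rho = (2 * lam) * (s * F s)"
      unfolding fisher_info_def F_def sum_distrib_left s_def
      by (rule sum.cong) (auto simp: fY[OF t] fd[OF t])
    moreover have "fisher_info psi lam fI rho = (2 * lam) * F 1"
      unfolding fisher_info_def F_def sum_distrib_left
      by (rule sum.cong) (auto simp: Y1 d_def field_simps rne)
    moreover have "s * F s \<le> s powr (1 + a) * F 1" using Fbound[OF xJ] s01[OF t] by (simp add: s_def)
    ultimately show "fisher_info psi lam (f t) rho \<le> exp (-(2 * lam + mu) * t) * fisher_info psi lam fI rho"
      using ex[of t] lam by (simp add: s_def)
  qed
  show ?thesis using part1 part2 by blast
qed
end
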